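(* For every tree $T=(V,E,w)$ whose cost function $w$ is down-monotonic and rounded, there exists an optimal extended strategy function for $T$ that is aligned.
   Context: $w$ is down-monotonic if there is a vertex $r$ such that $w(v)\le w(u)$ whenever $v$ lies on the path between $r$ and $u$; $w$ is rounded if each $w(u)$ equals $2^j$ for a nonnegative integer $j$. Intervals are of the form $[a,b)$ with integers $0\le a<b$, $|[a,b)|=b-a$; for $I=[a,b)$, $I'=[a',b')$ write $I>I'$ iff $a\ge b'$. An extended strategy function for $T$ is a map $f$ assigning to each vertex $u$ an interval $f(u)$ with $|f(u)|\ge w(u)$, such that for any distinct $v_1,v_2$ with $f(v_1)\cap f(v_2)\ne\emptyset$, the path between $v_1$ and $v_2$ contains a vertex $v_3$ with $f(v_3)>f(v_1)$ and $f(v_3)>f(v_2)$. It is optimal if $\sup\bigcup_{u\in V}f(u)$ is minimum among all extended strategy functions for $T$. A vertex $u$ is aligned if both endpoints of $f(u)$ are multiples of $w(u)$, and $f$ is aligned if every vertex is aligned. *)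

theory Defs
  imports Main
begin

definition walk :: "'a rel \<Rightarrow> 'a list \<Rightarrow> bool" where
  "walk E xs \<longleftrightarrow> (\<forall>i. Suc i < length xs \<longrightarrow> (xs ! i, xs ! Suc i) \<in> E)"

definition is_path :: "'a rel \<Rightarrow> 'a list \<Rightarrow> 'a \<Rightarrow> 'a \<Rightarrow> bool" where
  "is_path E xs u v \<longleftrightarrow> xs \<noteq> [] \<and> distinct xs \<and> walk E xs \<and> hd xs = u \<and> last xs = v"

definition is_tree :: "'a set \<Rightarrow> 'a rel \<Rightarrow> bool" where
  "is_tree V E \<longleftrightarrow> finite V \<and> V \<noteq> {} \<and> E \<subseteq> V \<times> V \<and> sym E \<and> (\<forall>x. (x, x) \<notin> E)
     \<and> (\<forall>u\<in>V. \<forall>v\<in>V. \<exists>xs. is_path E xs u v)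
     \<and> \<not> (\<exists>xs. 3 \<le> length xs \<and> distinct xs \<and> walk E xs \<and> (last xs, hd xs) \<in> E)"

text \<open>x lies on the path between u and v (in a tree this path is unique).\<close>
definition on_path :: "'a rel \<Rightarrow> 'a \<Rightarrow> 'a \<Rightarrow> 'a \<Rightarrow> bool" where
  "on_path E u v x \<longleftrightarrow> (\<exists>xs. is_path E xs u v \<and> x \<in> set xs)"

definition down_monotonic :: "'a set \<Rightarrow> 'a rel \<Rightarrow> ('a \<Rightarrow> nat) \<Rightarrow> bool" where
  "down_monotonic V E w \<longleftrightarrow>
     (\<exists>r\<in>V. \<forall>u\<in>V. \<forall>v\<in>V. on_path E r u v \<longrightarrow> w v \<le> w u)"

definition rounded :: "'a set \<Rightarrow> ('a \<Rightarrow> nat) \<Rightarrow> bool" where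
  "rounded V w \<longleftrightarrow> (\<forall>u\<in>V. \<exists>j::nat. w u = 2 ^ j)"

definition ival :: "nat \<times> nat \<Rightarrow> nat set" where
  "ival I = {fst I..<snd I}"

definition ival_gt :: "nat \<times> nat \<Rightarrow> nat \<times> nat \<Rightarrow> bool" where
  "ival_gt I I' \<longleftrightarrow> fst I \<ge> snd I'"

definition ext_strategy :: "'a set \<Rightarrow> 'a rel \<Rightarrow> ('a \<Rightarrow> nat) \<Rightarrow> ('a \<Rightarrow> nat \<times> nat) \<Rightarrow> bool" where
  "ext_strategy V E w f \<longleftrightarrow>
     (\<forall>u\<in>V. fst (f u) < snd (f u) \<and> snd (f u) - fst (f u) \<ge> w u)
     \<and> (\<forall>v1\<in>V. \<forall>v2\<in>V. v1 \<noteq> v2 \<and> ival (f v1) \<inter> ival (f v2) \<noteq> {} \<longrightarrow>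
          (\<exists>v3. on_path E v1 v2 v3 \<and> ival_gt (f v3) (f v1) \<and> ival_gt (f v3) (f v2)))"

text \<open>sup of the union of all intervals f(u), u in V (the largest right endpoint).\<close>
definition strat_cost :: "'a set \<Rightarrow> ('a \<Rightarrow> nat \<times> nat) \<Rightarrow> nat" where
  "strat_cost V f = Max ((\<lambda>u. snd (f u)) ` V)"

definition optimal_ext_strategy :: "'a set \<Rightarrow> 'a rel \<Rightarrow> ('a \<Rightarrow> nat) \<Rightarrow> ('a \<Rightarrow> nat \<times> nat) \<Rightarrow> bool" where
  "optimal_ext_strategy V E w f \<longleftrightarrow> ext_strategy V E w f \<and>
     (\<forall>g. ext_strategy V E w g \<longrightarrow> strat_cost V f \<le> strat_cost V g)"

definition aligned :: "'a set \<Rightarrow> ('a \<Rightarrow> nat) \<Rightarrow> ('a \<Rightarrow> nat \<times> nat) \<Rightarrow> bool" where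
  "aligned V w f \<longleftrightarrow> (\<forall>u\<in>V. w u dvd fst (f u) \<and> w u dvd snd (f u))"

end

theory Submission
  imports Defs
begin


lemma walk_Nil[simp]: "walk E []" by (simp add: walk_def)

lemma walk_Cons: "walk E (x # xs) \<longleftrightarrow> walk E xs \<and> (xs \<noteq> [] \<longrightarrow> (x, hd xs) \<in> E)"
proof (cases xs)
  case Nil then show ?thesis by (simp add: walk_def)
next
  case (Cons y ys)
  show ?thesis
  proof
    assume h: "walk E (x # xs)"
    have "walk E xs" unfolding walk_def
    proof (intro allI impI)
      fix i assume "Suc i < length xs"
      then show "(xs ! i, xs ! Suc i) \<in> E" using h[unfolded walk_def, rule_format, of "Suc i"] by simp
    qed
    moreover have "(x, hd xs) \<in> E" using h[unfolded walk_def, rule_format, of 0] Cons by simp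
    ultimately show "walk E xs \<and> (xs \<noteq> [] \<longrightarrow> (x, hd xs) \<in> E)" by simp
  next
    assume h: "walk E xs \<and> (xs \<noteq> [] \<longrightarrow> (x, hd xs) \<in> E)"
    show "walk E (x # xs)" unfolding walk_def
    proof (intro allI impI)
      fix i assume i: "Suc i < length (x # xs)"
      show "((x # xs) ! i, (x # xs) ! Suc i) \<in> E"
      proof (cases i)
        case 0 then show ?thesis using h Cons by simp
      next
        case (Suc j) then show ?thesis using h[THEN conjunct1, unfolded walk_def, rule_format, of j] i by simp
      qed
    qed
  qed
qed

lemma walk_append: "walk E (xs @ ys) \<longleftrightarrow> walk E xs \<and> walk E ys \<and> (xs \<noteq> [] \<longrightarrow> ys \<noteq> [] \<longrightarrow> (last xs, hd ys) \<in> E)"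
  by (induction xs) (auto simp: walk_Cons)

lemma walk_rev: "sym E \<Longrightarrow> walk E (rev xs) \<longleftrightarrow> walk E xs"
  by (induction xs) (auto simp: walk_Cons walk_append hd_rev last_rev sym_def)

lemma walk_join: "walk E xs \<Longrightarrow> walk E ys \<Longrightarrow> xs \<noteq> [] \<Longrightarrow> ys \<noteq> [] \<Longrightarrow> last xs = hd ys
  \<Longrightarrow> walk E (xs @ tl ys) \<and> hd (xs @ tl ys) = hd xs \<and> last (xs @ tl ys) = last ys"
  by (cases ys) (auto simp: walk_append walk_Cons)

lemma walk_path:
  "walk E ws \<Longrightarrow> ws \<noteq> [] \<Longrightarrow> \<exists>ps. is_path E ps (hd ws) (last ws) \<and> set ps \<subseteq> set ws"
proof (induction "length ws" arbitrary: ws rule: less_induct)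
  case less
  show ?case
  proof (cases "distinct ws")
    case True then show ?thesis using less.prems by (auto simp: is_path_def)
  next
    case False
    then obtain xs ys zs y where ws: "ws = xs @ [y] @ ys @ [y] @ zs" using not_distinct_decomp by blast
    let ?ws = "xs @ [y] @ zs"
    have "walk E ?ws" using less.prems(1) unfolding ws by (auto simp: walk_append walk_Cons)
    moreover have "length ?ws < length ws" using ws by simp
    moreover have "hd ?ws = hd ws" "last ?ws = last ws" using ws by (cases xs; cases zs; simp)+
    ultimately obtain ps where "is_path E ps (hd ws) (last ws)" "set ps \<subseteq> set ?ws"
      using less.hyps[of ?ws] by fastforce
    moreover have "set ?ws \<subseteq> set ws" using ws by auto
    ultimately show ?thesis by blast
  qed
qed

lemma walk_in_V: "walk E xs \<Longrightarrow> E \<subseteq> V \<times> V \<Longrightarrow> xs \<noteq> [] \<Longrightarrow> hd xs \<in> V \<Longrightarrow> set xs \<subseteq> V"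
proof (induction xs)
  case (Cons a xs)
  then show ?case by (cases xs) (auto simp: walk_Cons)
qed simp

lemma tree_K:
  assumes T: "is_tree V E" and p: "is_path E ps x y" and z: "z \<in> set ps"
    and ws: "walk E ws" "ws \<noteq> []" "hd ws = x" "last ws = y"
  shows "z \<in> set ws"
proof (rule ccontr)
  assume zn: "z \<notin> set ws"
  have symE: "sym E" using T by (simp add: is_tree_def)
  have xz: "z \<noteq> x" using zn ws by (metis hd_in_set)
  have yz: "z \<noteq> y" using zn ws by (metis last_in_set)
  obtain as bs where ps: "ps = as @ z # bs" using z split_list by metis
  have asne: "as \<noteq> []" using ps p xz by (auto simp: is_path_def)
  have bsne: "bs \<noteq> []" using ps p yz by (auto simp: is_path_def)
  have pw: "walk E ps" and dps: "distinct ps" using p by (auto simp: is_path_def)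
  have wa: "walk E as" and wb: "walk E bs" and eaz: "(last as, z) \<in> E" and ezb: "(z, hd bs) \<in> E"
    using pw asne bsne unfolding ps by (auto simp: walk_append walk_Cons)
  have hx: "hd as = x" using p asne ps by (auto simp: is_path_def)
  have ly: "last bs = y" using p bsne ps by (auto simp: is_path_def)
  define W1 where "W1 = rev as @ tl ws"
  have W1: "walk E W1 \<and> hd W1 = last as \<and> last W1 = y"
    using walk_join[of E "rev as" ws] wa ws asne hx symE by (simp add: W1_def walk_rev hd_rev last_rev)
  have W1ne: "W1 \<noteq> []" using asne W1_def by simp
  define W2 where "W2 = W1 @ tl (rev bs)"
  have W2: "walk E W2 \<and> hd W2 = last as \<and> last W2 = hd bs"
    using walk_join[of E W1 "rev bs"] W1 W1ne wb bsne ly symE by (simp add: W2_def walk_rev hd_rev last_rev)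
  have zW2: "z \<notin> set W2"
  proof -
    have "set W2 \<subseteq> set as \<union> set ws \<union> set bs" unfolding W2_def W1_def
      by (auto dest: list.set_sel(2)[rotated] simp del: list.set_sel)
         (metis list.sel(2) list.set_sel(2) set_rev tl_Nil)+
    moreover have "z \<notin> set as" "z \<notin> set bs" using dps ps by auto
    ultimately show ?thesis using zn by blast
  qed
  obtain qs where qs: "is_path E qs (last as) (hd bs)" "set qs \<subseteq> set W2"
    using walk_path[of E W2] W2 W1ne unfolding W2_def by fastforce
  have ab: "last as \<noteq> hd bs"
  proof -
    have "last as \<in> set as" "hd bs \<in> set bs" using asne bsne by auto
    then show ?thesis using dps ps by auto
  qed
  have zq: "z \<notin> set qs" using qs zW2 by blast
  have lq: "2 \<le> length qs"
  proof -
    have "qs \<noteq> []" using qs by (simp add: is_path_def)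
    then show ?thesis using qs ab by (cases qs rule: remdups_adj.cases) (auto simp: is_path_def)
  qed
  have "3 \<le> length (z # qs) \<and> distinct (z # qs) \<and> walk E (z # qs) \<and> (last (z # qs), hd (z # qs)) \<in> E"
    using lq zq qs eaz ezb symE by (auto simp: is_path_def walk_Cons dest: symD)
  then show False using T unfolding is_tree_def by blast
qed

lemma path_V: "is_tree V E \<Longrightarrow> is_path E ps x y \<Longrightarrow> x \<in> V \<Longrightarrow> set ps \<subseteq> V"
  using walk_in_V[of E ps V] by (auto simp: is_tree_def is_path_def)

lemma on_path_V: "is_tree V E \<Longrightarrow> on_path E x y z \<Longrightarrow> x \<in> V \<Longrightarrow> z \<in> V"
  using path_V by (fastforce simp: on_path_def)

lemma on_path_walk: "is_tree V E \<Longrightarrow> on_path E x y z \<Longrightarrow> walk E ws \<Longrightarrow> ws \<noteq> [] \<Longrightarrow> hd ws = x \<Longrightarrow> last ws = y \<Longrightarrow> z \<in> set ws"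
  using tree_K by (fastforce simp: on_path_def)

lemma exists_path: "is_tree V E \<Longrightarrow> x \<in> V \<Longrightarrow> y \<in> V \<Longrightarrow> \<exists>ps. is_path E ps x y"
  by (simp add: is_tree_def)

lemma not_on_path_walk:
  assumes "is_tree V E" "x \<in> V" "y \<in> V" "\<not> on_path E x y z"
  shows "\<exists>ws. walk E ws \<and> ws \<noteq> [] \<and> hd ws = x \<and> last ws = y \<and> z \<notin> set ws"
proof -
  obtain ps where "is_path E ps x y" using exists_path[OF assms(1-3)] by blast
  moreover have "z \<notin> set ps" using assms(4) calculation unfolding on_path_def by blast
  ultimately show ?thesis unfolding is_path_def by (intro exI[of _ ps]) simp
qed

lemma on_path_sym: "is_tree V E \<Longrightarrow> on_path E x y z \<Longrightarrow> on_path E y x z"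
proof -
  assume T: "is_tree V E" and "on_path E x y z"
  then obtain xs where xs: "is_path E xs x y" "z \<in> set xs" by (auto simp: on_path_def)
  have "sym E" using T by (simp add: is_tree_def)
  then have "is_path E (rev xs) y x" using xs by (auto simp: is_path_def walk_rev hd_rev last_rev)
  then show ?thesis using xs by (auto simp: on_path_def)
qed

lemma on_path_self: "on_path E x x z \<Longrightarrow> z = x"
  unfolding on_path_def is_path_def
proof (elim exE conjE)
  fix xs assume h: "xs \<noteq> []" "distinct xs" "hd xs = x" "last xs = x" "z \<in> set xs"
  then obtain a ys where xs: "xs = a # ys" by (cases xs) auto
  show "z = x"
  proof (cases ys)
    case Nil then show ?thesis using h xs by simp
  next
    case (Cons b zs)
    then have "last xs \<in> set ys" using xs by simp
    then show ?thesis using h xs by auto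
  qed
qed

lemma on_path_ends: "is_tree V E \<Longrightarrow> x \<in> V \<Longrightarrow> y \<in> V \<Longrightarrow> on_path E x y x \<and> on_path E x y y"
proof -
  assume a: "is_tree V E" "x \<in> V" "y \<in> V"
  obtain ps where "is_path E ps x y" using exists_path[OF a] by blast
  then show ?thesis unfolding on_path_def is_path_def by (metis hd_in_set last_in_set)
qed

lemma on_path_T1:
  assumes T: "is_tree V E" and V: "x \<in> V" "y \<in> V" "r \<in> V" and p: "on_path E x y z"
  shows "on_path E x r z \<or> on_path E r y z"
proof (rule ccontr)
  assume "\<not> (on_path E x r z \<or> on_path E r y z)"
  then have n1: "\<not> on_path E x r z" and n2: "\<not> on_path E r y z" by auto
  obtain w1 where w1: "walk E w1" "w1 \<noteq> []" "hd w1 = x" "last w1 = r" "z \<notin> set w1"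
    using not_on_path_walk[OF T V(1) V(3) n1] by blast
  obtain w2 where w2: "walk E w2" "w2 \<noteq> []" "hd w2 = r" "last w2 = y" "z \<notin> set w2"
    using not_on_path_walk[OF T V(3) V(2) n2] by blast
  have j: "walk E (w1 @ tl w2) \<and> hd (w1 @ tl w2) = x \<and> last (w1 @ tl w2) = y"
    using walk_join[of E w1 w2] w1 w2 by simp
  have "z \<notin> set (w1 @ tl w2)" using w1 w2 by (cases w2) auto
  moreover have "w1 @ tl w2 \<noteq> []" using w1 by simp
  ultimately show False using on_path_walk[OF T p, of "w1 @ tl w2"] j by blast
qed

lemma on_path_T2:
  assumes T: "is_tree V E" and p: "on_path E x y z" and q: "on_path E x z t"
  shows "on_path E x y t"
proof -
  obtain ps where ps: "is_path E ps x y" "z \<in> set ps" using p by (auto simp: on_path_def)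
  obtain as bs where s: "ps = as @ z # bs" using ps split_list by metis
  have "walk E (as @ [z])" using ps s by (auto simp: is_path_def walk_append walk_Cons)
  moreover have "hd (as @ [z]) = x" using ps s by (cases as) (auto simp: is_path_def)
  ultimately have "t \<in> set (as @ [z])" using on_path_walk[OF T q, of "as @ [z]"] by simp
  then have "t \<in> set ps" using s by auto
  then show ?thesis using ps by (auto simp: on_path_def)
qed

definition conn :: "'a rel \<Rightarrow> 'a set \<Rightarrow> 'a \<Rightarrow> 'a \<Rightarrow> bool" where
  "conn E U x y \<longleftrightarrow> (\<forall>z. on_path E x y z \<longrightarrow> z \<in> U)"

definition QU :: "'a rel \<Rightarrow> 'a set \<Rightarrow> ('a \<Rightarrow> nat \<times> nat) \<Rightarrow> bool" where
  "QU E U g \<longleftrightarrow> (\<forall>v1\<in>U. \<forall>v2\<in>U. v1 \<noteq> v2 \<and> ival (g v1) \<inter> ival (g v2) \<noteq> {} \<and> conn E U v1 v2 \<longrightarrow>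
     (\<exists>v3. on_path E v1 v2 v3 \<and> ival_gt (g v3) (g v1) \<and> ival_gt (g v3) (g v2)))"

lemma ovl: "ival I \<inter> ival J \<noteq> {} \<longleftrightarrow> (fst I < snd J \<and> fst J < snd I \<and> fst I < snd I \<and> fst J < snd J)"
  by (auto simp: ival_def)

lemma conn_mono: "U \<subseteq> U' \<Longrightarrow> conn E U x y \<Longrightarrow> conn E U' x y"
  by (auto simp: conn_def)

lemma conn_sym: "is_tree V E \<Longrightarrow> conn E U x y \<Longrightarrow> conn E U y x"
  using on_path_sym by (metis conn_def)

lemma conn_trans: "is_tree V E \<Longrightarrow> x \<in> V \<Longrightarrow> y \<in> V \<Longrightarrow> z \<in> V \<Longrightarrow> conn E U x y \<Longrightarrow> conn E U y z \<Longrightarrow> conn E U x z"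
  unfolding conn_def using on_path_T1 by metis

lemma conn_self: "x \<in> U \<Longrightarrow> conn E U x x"
  using on_path_self by (metis conn_def)

lemma conn_sub2: "is_tree V E \<Longrightarrow> on_path E x y z \<Longrightarrow> conn E U x y \<Longrightarrow> conn E U x z"
  unfolding conn_def using on_path_T2 by metis

lemma conn_sub: "is_tree V E \<Longrightarrow> on_path E x y z \<Longrightarrow> conn E U x y \<Longrightarrow> conn E U z x"
  using conn_sub2 conn_sym by metis

lemma conn_V: "is_tree V E \<Longrightarrow> x \<in> V \<Longrightarrow> conn E V x y"
  unfolding conn_def using on_path_V by metis



lemma pow2_dvd: "rounded V w \<Longrightarrow> a \<in> V \<Longrightarrow> b \<in> V \<Longrightarrow> w a \<le> w b \<Longrightarrow> w a dvd w b"
proof -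
  assume R: "rounded V w" and ab: "a \<in> V" "b \<in> V" "w a \<le> w b"
  obtain i j where "w a = 2 ^ i" "w b = 2 ^ j" using R ab unfolding rounded_def by blast
  then show ?thesis using ab(3) by (simp add: le_imp_power_dvd)
qed

lemma wpos: "rounded V w \<Longrightarrow> a \<in> V \<Longrightarrow> 0 < w a"
  unfolding rounded_def by auto

lemma mult_le_floor: "(0::nat) < m \<Longrightarrow> m dvd s \<Longrightarrow> s \<le> a \<Longrightarrow> s \<le> a div m * m"
proof -
  assume h: "0 < m" "m dvd s" "s \<le> a"
  have "s div m \<le> a div m" using h(3) by (rule div_le_mono)
  then have "s div m * m \<le> a div m * m" by (rule mult_le_mono1)
  then show ?thesis using h(2) by simp
qed

lemma dvd_lt_step: "(0::nat) < m \<Longrightarrow> m dvd s \<Longrightarrow> m dvd F \<Longrightarrow> s < F \<Longrightarrow> s + m \<le> F"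
proof -
  assume h: "0 < m" "m dvd s" "m dvd F" "s < F"
  then obtain i j where "s = m * i" "F = m * j" by (auto elim!: dvdE)
  with h have "i < j" by simp
  then have "m * (i + 1) \<le> m * j" by (intro mult_le_mono2) simp
  then show ?thesis using \<open>s = m * i\<close> \<open>F = m * j\<close> by simp
qed

context
  fixes V :: "'a set" and E :: "'a rel" and w :: "'a \<Rightarrow> nat" and r :: 'a
  assumes T: "is_tree V E" and R: "rounded V w" and rV: "r \<in> V"
    and mono: "\<forall>u\<in>V. \<forall>v\<in>V. on_path E r u v \<longrightarrow> w v \<le> w u"
begin

lemma main:
  assumes "finite U" "U \<subseteq> V" "\<forall>u\<in>U. fst (f u) + w u \<le> snd (f u)" "QU E U f"
  shows "\<exists>g. (\<forall>u\<in>U. snd (g u) = fst (g u) + w u \<and> w u dvd fst (g u)) \<and> QU E U g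
      \<and> (\<forall>x\<in>U. \<exists>y\<in>U. conn E U x y \<and> snd (g x) \<le> snd (f y))"
  using assms
proof (induction "card U" arbitrary: U rule: less_induct)
  case less
  show ?case
  proof (cases "U = {}")
    case True then show ?thesis by (auto simp: QU_def)
  next
    case False
    note fin = less.prems(1) and UV = less.prems(2) and len = less.prems(3) and Q = less.prems(4)
    define m where "m = Max ((\<lambda>u. fst (f u)) ` U)"
    have "m \<in> (\<lambda>u. fst (f u)) ` U" unfolding m_def using fin False by (intro Max_in) auto
    then obtain v where vU: "v \<in> U" and vm: "fst (f v) = m" by auto
    have vmax: "\<forall>u\<in>U. fst (f u) \<le> fst (f v)" unfolding vm m_def using fin by auto
    define U' where "U' = U - {v}"
    have cardlt: "card U' < card U" unfolding U'_def by (rule card_Diff1_less[OF fin vU])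
    have U'U: "U' \<subseteq> U" by (auto simp: U'_def)
    have Q': "QU E U' f" unfolding QU_def
    proof (intro ballI impI)
      fix v1 v2 assume a: "v1 \<in> U'" "v2 \<in> U'" "v1 \<noteq> v2 \<and> ival (f v1) \<inter> ival (f v2) \<noteq> {} \<and> conn E U' v1 v2"
      then have "conn E U v1 v2" using conn_mono[OF U'U] by blast
      then show "\<exists>v3. on_path E v1 v2 v3 \<and> ival_gt (f v3) (f v1) \<and> ival_gt (f v3) (f v2)"
        using Q a U'U unfolding QU_def by blast
    qed
    have U'V: "U' \<subseteq> V" using U'U UV by blast
    have fin': "finite U'" using finite_subset[OF U'U fin] .
    have len': "\<forall>u\<in>U'. fst (f u) + w u \<le> snd (f u)" using len U'U by blast
    obtain g where g1: "\<forall>u\<in>U'. snd (g u) = fst (g u) + w u \<and> w u dvd fst (g u)" and g2: "QU E U' g"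
      and g3: "\<forall>x\<in>U'. \<exists>y\<in>U'. conn E U' x y \<and> snd (g x) \<le> snd (f y)"
      using less.hyps[OF cardlt fin' U'V len' Q'] by blast
    have vV: "v \<in> V" using vU UV by blast
    define a where "a = fst (f v)"
    define wv where "wv = w v"
    define F where "F = a div wv * wv"
    have wvpos: "0 < wv" using wpos[OF R vV] by (simp add: wv_def)
    have Fa: "F \<le> a" unfolding F_def by simp
    have wvF: "wv dvd F" unfolding F_def by simp
    have av: "a + wv \<le> snd (f v)" using len vU by (simp add: a_def wv_def)
    have A: "\<forall>y\<in>U. y \<noteq> v \<longrightarrow> conn E U y v \<longrightarrow> snd (f y) \<le> a"
    proof (intro ballI impI)
      fix y assume y: "y \<in> U" "y \<noteq> v" "conn E U y v"
      show "snd (f y) \<le> a"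
      proof (rule ccontr)
        assume "\<not> ?thesis"
        moreover have "fst (f y) \<le> a" using vmax y by (simp add: a_def)
        ultimately have "ival (f y) \<inter> ival (f v) \<noteq> {}" using av wvpos by (simp add: ovl a_def)
        then obtain v3 where v3: "on_path E y v v3" "ival_gt (f v3) (f v)"
          using Q y vU unfolding QU_def by blast
        have "v3 \<in> U" using v3 y unfolding conn_def by blast
        then show False using v3 vmax av wvpos by (auto simp: ival_gt_def a_def)
      qed
    qed
    have B: "\<forall>x\<in>U'. conn E U x v \<longrightarrow> snd (g x) \<le> a"
    proof (intro ballI impI)
      fix x assume x: "x \<in> U'" "conn E U x v"
      obtain y where y: "y \<in> U'" "conn E U' x y" "snd (g x) \<le> snd (f y)" using g3 x by blast
      have "conn E U y x" using conn_sym[OF T] conn_mono[OF U'U] y by blast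
      then have "conn E U y v" using conn_trans[OF T] x y U'V vV by blast
      then have "snd (f y) \<le> a" using A y U'U by (auto simp: U'_def)
      then show "snd (g x) \<le> a" using y by simp
    qed
    have C: "\<forall>x\<in>U'. conn E U x v \<longrightarrow> snd (g x) \<le> F \<or> (F \<le> fst (g x) \<and> w x < wv \<and> w x dvd wv)"
    proof (intro ballI impI)
      fix x assume x: "x \<in> U'" "conn E U x v"
      have xV: "x \<in> V" using x U'V by blast
      have wx: "0 < w x" using wpos[OF R xV] .
      have gx: "snd (g x) = fst (g x) + w x" "w x dvd fst (g x)" using g1 x by auto
      show "snd (g x) \<le> F \<or> (F \<le> fst (g x) \<and> w x < wv \<and> w x dvd wv)"
      proof (cases "wv \<le> w x")
        case True
        then have "wv dvd w x" using pow2_dvd[OF R vV xV] by (simp add: wv_def)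
        then have "wv dvd snd (g x)" using gx by (metis dvd_add dvd_trans dvd_refl)
        then have "snd (g x) \<le> F" using mult_le_floor[OF wvpos _ B[rule_format, OF x]] by (simp add: F_def)
        then show ?thesis by simp
      next
        case False
        then have d: "w x dvd wv" using pow2_dvd[OF R xV vV] by (simp add: wv_def)
        then have dF: "w x dvd F" using wvF by (rule dvd_trans)
        show ?thesis
        proof (cases "fst (g x) < F")
          case True
          then have "fst (g x) + w x \<le> F" using dvd_lt_step[OF wx gx(2) dF] by simp
          then show ?thesis using gx by simp
        next
          case False2: False
          then show ?thesis using False d by simp
        qed
      qed
    qed
    define S where "S x \<longleftrightarrow> x \<noteq> v \<and> conn E U x v \<and> F \<le> fst (g x)" for x
    have gpos: "\<forall>x\<in>U'. fst (g x) < snd (g x)" using g1 wpos[OF R] U'V by auto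
    have D: "\<forall>x\<in>U'. S x \<longrightarrow> w x < wv \<and> w x dvd wv"
    proof (intro ballI impI)
      fix x assume x: "x \<in> U'" "S x"
      then have "conn E U x v" "F \<le> fst (g x)" by (auto simp: S_def)
      then show "w x < wv \<and> w x dvd wv" using C x gpos by force
    qed
    have Ee: "\<forall>x\<in>U'. conn E U x v \<longrightarrow> \<not> S x \<longrightarrow> snd (g x) \<le> F"
      using C unfolding S_def U'_def by auto
    have Sv: "\<forall>x\<in>U'. S x \<longrightarrow> \<not> on_path E r x v"
    proof (intro ballI impI notI)
      fix x assume "x \<in> U'" "S x" "on_path E r x v"
      then have "w v \<le> w x" using mono U'V vV by blast
      then show False using D \<open>x \<in> U'\<close> \<open>S x\<close> by (auto simp: wv_def)
    qed
    define g' where "g' x = (if x = v then (F, F + wv) else if S x then (fst (g x) + wv, snd (g x) + wv) else g x)" for x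
    have g'v: "g' v = (F, F + wv)" by (simp add: g'_def)
    have g'S: "\<And>x. x \<noteq> v \<Longrightarrow> S x \<Longrightarrow> g' x = (fst (g x) + wv, snd (g x) + wv)" by (simp add: g'_def)
    have g'N: "\<And>x. x \<noteq> v \<Longrightarrow> \<not> S x \<Longrightarrow> g' x = g x" by (simp add: g'_def)
    have fstmono: "\<And>x. x \<noteq> v \<Longrightarrow> fst (g x) \<le> fst (g' x)" using g'S g'N by (metis fst_conv le_add1 order_refl)
    have key: "\<forall>x\<in>U'. conn E U x v \<longrightarrow> (S x \<and> F + wv \<le> fst (g' x)) \<or> (\<not> S x \<and> snd (g' x) \<le> F)"
    proof (intro ballI impI)
      fix x assume x: "x \<in> U'" "conn E U x v"
      then have xv: "x \<noteq> v" by (simp add: U'_def)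
      show "(S x \<and> F + wv \<le> fst (g' x)) \<or> (\<not> S x \<and> snd (g' x) \<le> F)"
      proof (cases "S x")
        case True then show ?thesis using g'S[OF xv] by (simp add: S_def)
      next
        case False then show ?thesis using g'N[OF xv] Ee x by simp
      qed
    qed
    show ?thesis
    proof (intro exI[of _ g'] conjI)
      show "\<forall>u\<in>U. snd (g' u) = fst (g' u) + w u \<and> w u dvd fst (g' u)"
      proof
        fix u assume u: "u \<in> U"
        show "snd (g' u) = fst (g' u) + w u \<and> w u dvd fst (g' u)"
        proof (cases "u = v")
          case True then show ?thesis using g'v wvF by (simp add: wv_def)
        next
          case False
          then have u': "u \<in> U'" using u by (simp add: U'_def)
          show ?thesis
          proof (cases "S u")
            case True
            then show ?thesis using g'S[OF False True] g1 u' D by auto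
          next
            case False2: False
            then show ?thesis using g'N[OF False False2] g1 u' by auto
          qed
        qed
      qed
    next
      show "\<forall>x\<in>U. \<exists>y\<in>U. conn E U x y \<and> snd (g' x) \<le> snd (f y)"
      proof
        fix x assume x: "x \<in> U"
        show "\<exists>y\<in>U. conn E U x y \<and> snd (g' x) \<le> snd (f y)"
        proof (cases "x = v")
          case True
          then show ?thesis using g'v conn_self[OF vU] vU Fa av by (intro bexI[of _ v]) auto
        next
          case False
          then have x': "x \<in> U'" using x by (simp add: U'_def)
          show ?thesis
          proof (cases "S x")
            case True
            have "snd (g x) \<le> a" using B x' True by (simp add: S_def)
            then show ?thesis using g'S[OF False True] True vU av unfolding S_def by (intro bexI[of _ v]) auto
          next
            case False2: False
            obtain y where y: "y \<in> U'" "conn E U' x y" "snd (g x) \<le> snd (f y)" using g3 x' by blast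
            then show ?thesis using g'N[OF False False2] conn_mono[OF U'U] U'U by (intro bexI[of _ y]) auto
          qed
        qed
      qed
    next
      show "QU E U g'" unfolding QU_def
      proof (intro ballI impI, elim conjE)
        fix v1 v2 assume v1: "v1 \<in> U" and v2: "v2 \<in> U" and ne: "v1 \<noteq> v2"
          and ov: "ival (g' v1) \<inter> ival (g' v2) \<noteq> {}" and c: "conn E U v1 v2"
        have ov2: "fst (g' v1) < snd (g' v2)" "fst (g' v2) < snd (g' v1)" using ov by (auto simp: ovl)
        show "\<exists>v3. on_path E v1 v2 v3 \<and> ival_gt (g' v3) (g' v1) \<and> ival_gt (g' v3) (g' v2)"
        proof (cases "v1 = v")
          case True
          then have v2': "v2 \<in> U'" using v2 ne by (simp add: U'_def)
          have "conn E U v2 v" using conn_sym[OF T c] True by simp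
          then have "(S v2 \<and> F + wv \<le> fst (g' v2)) \<or> (\<not> S v2 \<and> snd (g' v2) \<le> F)" using key v2' by blast
          then have False using ov2 g'v True by auto
          then show ?thesis ..
        next
          case n1: False
          then have v1': "v1 \<in> U'" using v1 by (simp add: U'_def)
          show ?thesis
          proof (cases "v2 = v")
            case True
            then have "conn E U v1 v" using c by simp
            then have "(S v1 \<and> F + wv \<le> fst (g' v1)) \<or> (\<not> S v1 \<and> snd (g' v1) \<le> F)" using key v1' by blast
            then have False using ov2 g'v True by auto
            then show ?thesis ..
          next
            case n2: False
            then have v2': "v2 \<in> U'" using v2 by (simp add: U'_def)
            have v1V: "v1 \<in> V" and v2V: "v2 \<in> V" using v1' v2' U'V by auto
            show ?thesis
            proof (cases "on_path E v1 v2 v")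
              case True
              have c1: "conn E U v1 v" using conn_sub2[OF T True c] .
              have c2: "conn E U v2 v"
                using conn_sub2[OF T on_path_sym[OF T True] conn_sym[OF T c]] .
              have notboth: "\<not> (S v1 \<and> S v2)"
              proof
                assume "S v1 \<and> S v2"
                then have "\<not> on_path E r v1 v" "\<not> on_path E r v2 v" using Sv v1' v2' by auto
                moreover have "on_path E v1 r v \<or> on_path E r v2 v" using on_path_T1[OF T v1V v2V rV True] .
                ultimately show False using on_path_sym[OF T] by blast
              qed
              have k1: "(S v1 \<and> F + wv \<le> fst (g' v1)) \<or> (\<not> S v1 \<and> snd (g' v1) \<le> F)" using key v1' c1 by blast
              have k2: "(S v2 \<and> F + wv \<le> fst (g' v2)) \<or> (\<not> S v2 \<and> snd (g' v2) \<le> F)" using key v2' c2 by blast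
              have "snd (g' v1) \<le> F \<and> snd (g' v2) \<le> F"
              proof -
                have "fst (g' v1) < snd (g' v1)" "fst (g' v2) < snd (g' v2)" using ov by (auto simp: ovl)
                then show ?thesis using k1 k2 notboth ov2 by auto
              qed
              then show ?thesis using True g'v by (intro exI[of _ v]) (auto simp: ival_gt_def)
            next
              case False
              have c': "conn E U' v1 v2" using c False unfolding conn_def U'_def by blast
              show ?thesis
              proof (cases "S v1 \<or> S v2")
                case True
                have c1: "conn E U v1 v" and c2: "conn E U v2 v"
                proof -
                  have "conn E U v1 v \<or> conn E U v2 v" using True by (auto simp: S_def)
                  then show "conn E U v1 v" "conn E U v2 v"
                    using conn_trans[OF T v1V v2V vV c] conn_trans[OF T v2V v1V vV conn_sym[OF T c]] by blast+
                qed
                have k1: "(S v1 \<and> F + wv \<le> fst (g' v1)) \<or> (\<not> S v1 \<and> snd (g' v1) \<le> F)" using key v1' c1 by blast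
                have k2: "(S v2 \<and> F + wv \<le> fst (g' v2)) \<or> (\<not> S v2 \<and> snd (g' v2) \<le> F)" using key v2' c2 by blast
                have S12: "S v1 \<and> S v2" using k1 k2 True ov2 by auto
                then have gg1: "g' v1 = (fst (g v1) + wv, snd (g v1) + wv)" and gg2: "g' v2 = (fst (g v2) + wv, snd (g v2) + wv)"
                  using g'S n1 n2 by auto
                have "ival (g v1) \<inter> ival (g v2) \<noteq> {}" using ov gg1 gg2 by (auto simp: ovl)
                then obtain v3 where v3: "on_path E v1 v2 v3" "ival_gt (g v3) (g v1)" "ival_gt (g v3) (g v2)"
                  using g2 v1' v2' ne c' unfolding QU_def by blast
                have v3U: "v3 \<in> U'" using c' v3(1) unfolding conn_def by blast
                have v3V: "v3 \<in> V" using v3U U'V by blast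
                have n3: "v3 \<noteq> v" using v3U by (simp add: U'_def)
                have "conn E U v3 v1" using conn_sub[OF T v3(1) c] .
                then have c3: "conn E U v3 v" using conn_trans[OF T v3V v1V vV _ c1] by blast
                have "F \<le> fst (g v1)" using S12 by (simp add: S_def)
                then have "F \<le> fst (g v3)" using v3(2) gpos v1' by (auto simp: ival_gt_def)
                then have "S v3" using n3 c3 by (simp add: S_def)
                then have "g' v3 = (fst (g v3) + wv, snd (g v3) + wv)" using g'S n3 by auto
                then show ?thesis using v3 gg1 gg2 by (intro exI[of _ v3]) (auto simp: ival_gt_def)
              next
                case False2: False
                then have gg1: "g' v1 = g v1" and gg2: "g' v2 = g v2" using g'N n1 n2 by auto
                obtain v3 where v3: "on_path E v1 v2 v3" "ival_gt (g v3) (g v1)" "ival_gt (g v3) (g v2)"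
                  using g2 v1' v2' ne c' ov gg1 gg2 unfolding QU_def by auto
                have v3U: "v3 \<in> U'" using c' v3(1) unfolding conn_def by blast
                have n3: "v3 \<noteq> v" using v3U by (simp add: U'_def)
                have "fst (g v3) \<le> fst (g' v3)" using fstmono[OF n3] .
                then show ?thesis using v3 gg1 gg2 by (intro exI[of _ v3]) (auto simp: ival_gt_def)
              qed
            qed
          qed
        qed
      qed
    qed
  qed
qed

end


lemma exists_strategy:
  fixes V :: "'a set" and E :: "'a rel" and w :: "'a \<Rightarrow> nat"
  assumes "finite V"
  shows "\<exists>h. ext_strategy V E w h"
proof -
  obtain hh :: "'a \<Rightarrow> nat" and n where hh: "inj_on hh V" using finite_imp_inj_to_nat_seg[OF assms] by blast
  define K where "K = (\<Sum>u\<in>V. w u) + 1"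
  define h where "h u = (hh u * K, hh u * K + K)" for u
  have wK: "u \<in> V \<Longrightarrow> w u < K" for u
    using member_le_sum[of u V w] assms by (simp add: K_def)
  have "ext_strategy V E w h" unfolding ext_strategy_def
  proof (intro conjI ballI impI)
    fix u assume "u \<in> V"
    then show "fst (h u) < snd (h u)" "w u \<le> snd (h u) - fst (h u)" using wK[of u] by (auto simp: h_def)
  next
    fix v1 v2 assume v: "v1 \<in> V" "v2 \<in> V" and c: "v1 \<noteq> v2 \<and> ival (h v1) \<inter> ival (h v2) \<noteq> {}"
    have ne: "hh v1 \<noteq> hh v2" using hh v c by (meson inj_onD)
    have o: "hh v1 * K < hh v2 * K + K" "hh v2 * K < hh v1 * K + K" using c by (auto simp: ovl h_def)
    have False
    proof (cases "hh v1 < hh v2")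
      case True
      then have "(hh v1 + 1) * K \<le> hh v2 * K" by (intro mult_le_mono1) simp
      then show False using o by simp
    next
      case False
      then have "hh v2 < hh v1" using ne by simp
      then have "(hh v2 + 1) * K \<le> hh v1 * K" by (intro mult_le_mono1) simp
      then show False using o by simp
    qed
    then show "\<exists>v3. on_path E v1 v2 v3 \<and> ival_gt (h v3) (h v1) \<and> ival_gt (h v3) (h v2)" ..
  qed
  then show ?thesis by blast
qed

theorem mainTheorem17:
  fixes V :: "'a set" and E :: "'a rel" and w :: "'a \<Rightarrow> nat"
  assumes "is_tree V E" and "down_monotonic V E w" and "rounded V w"
  shows "\<exists>f. optimal_ext_strategy V E w f \<and> aligned V w f"
proof -
  note T = assms(1) and R = assms(3)
  obtain r where rV: "r \<in> V" and mono: "\<forall>u\<in>V. \<forall>v\<in>V. on_path E r u v \<longrightarrow> w v \<le> w u"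
    using assms(2) unfolding down_monotonic_def by blast
  have finV: "finite V" and neV: "V \<noteq> {}" using T by (auto simp: is_tree_def)
  define P where "P c \<longleftrightarrow> (\<exists>g. ext_strategy V E w g \<and> strat_cost V g = c)" for c
  obtain h where h: "ext_strategy V E w h" using exists_strategy[OF finV] by blast
  have "P (strat_cost V h)" using h by (auto simp: P_def)
  then have "P (Least P)" by (rule LeastI)
  then obtain f0 where f0: "ext_strategy V E w f0" "strat_cost V f0 = Least P" by (auto simp: P_def)
  have f0opt: "ext_strategy V E w g \<Longrightarrow> strat_cost V f0 \<le> strat_cost V g" for g
  proof -
    assume "ext_strategy V E w g"
    then have "P (strat_cost V g)" by (auto simp: P_def)
    then have "Least P \<le> strat_cost V g" by (rule Least_le)
    then show ?thesis using f0(2) by simp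
  qed
  have len: "\<forall>u\<in>V. fst (f0 u) + w u \<le> snd (f0 u)" using f0(1) unfolding ext_strategy_def by auto
  have Q: "QU E V f0" using f0(1) unfolding ext_strategy_def QU_def by blast
  obtain g where g1: "\<forall>u\<in>V. snd (g u) = fst (g u) + w u \<and> w u dvd fst (g u)" and g2: "QU E V g"
    and g3: "\<forall>x\<in>V. \<exists>y\<in>V. conn E V x y \<and> snd (g x) \<le> snd (f0 y)"
    using main[OF T R rV mono finV subset_refl len Q] by blast
  have gs: "ext_strategy V E w g" unfolding ext_strategy_def
  proof (intro conjI ballI impI)
    fix u assume "u \<in> V"
    then show "fst (g u) < snd (g u)" "w u \<le> snd (g u) - fst (g u)" using g1 wpos[OF R] by auto
  next
    fix v1 v2 assume v: "v1 \<in> V" "v2 \<in> V" and c: "v1 \<noteq> v2 \<and> ival (g v1) \<inter> ival (g v2) \<noteq> {}"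
    have "conn E V v1 v2" using conn_V[OF T v(1)] .
    then show "\<exists>v3. on_path E v1 v2 v3 \<and> ival_gt (g v3) (g v1) \<and> ival_gt (g v3) (g v2)"
      using g2 v c unfolding QU_def by blast
  qed
  have "strat_cost V g \<le> strat_cost V f0" unfolding strat_cost_def
  proof (subst Max_le_iff)
    show "finite ((\<lambda>u. snd (g u)) ` V)" using finV by simp
    show "(\<lambda>u. snd (g u)) ` V \<noteq> {}" using neV by simp
    show "\<forall>a\<in>(\<lambda>u. snd (g u)) ` V. a \<le> Max ((\<lambda>u. snd (f0 u)) ` V)"
    proof
      fix a assume "a \<in> (\<lambda>u. snd (g u)) ` V"
      then obtain x where x: "x \<in> V" "a = snd (g x)" by auto
      then obtain y where y: "y \<in> V" "snd (g x) \<le> snd (f0 y)" using g3 by blast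
      have "snd (f0 y) \<le> Max ((\<lambda>u. snd (f0 u)) ` V)" using finV y(1) by (intro Max_ge) auto
      then show "a \<le> Max ((\<lambda>u. snd (f0 u)) ` V)" using x y by simp
    qed
  qed
  then have "optimal_ext_strategy V E w g" using gs f0opt unfolding optimal_ext_strategy_def
    using le_trans by blast
  moreover have "aligned V w g" unfolding aligned_def using g1 by auto
  ultimately show ?thesis by blast
qed

end
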